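(* Let $n\ge 1$, let $t\in[0,1]$ and let $g\in A_n$ be an even permutation. Then there exist even permutations $h,k\in A_n$ with $g=hk$ such that $|\mu_h-t\mu_g|\le \tfrac32$ and $|\mu_k-(1-t)\mu_g|\le\tfrac32$.
   Context: For a permutation $\pi$ of $\{1,\dots,n\}$, $\mu_\pi\in\{0,\dots,n\}$ denotes the number of points moved by $\pi$. *)

theory Defs
  imports "HOL-Combinatorics.Permutations" Complex_Main
begin

definition mu :: "(nat \<Rightarrow> nat) \<Rightarrow> nat" where
  "mu p = card {x. p x \<noteq> x}"

end

theory Submission
  imports Defs
begin

definition mv :: "(nat \<Rightarrow> nat) \<Rightarrow> nat set" where "mv p = {x. p x \<noteq> x}"

lemma mu_mv: "mu p = card (mv p)" by (simp add: mu_def mv_def)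

lemma mv_permutes_subset: "p permutes S \<Longrightarrow> mv p \<subseteq> S"
  unfolding mv_def using permutes_not_in by fastforce

definition good :: "nat set \<Rightarrow> (nat \<Rightarrow> nat) \<Rightarrow> real \<Rightarrow> (nat \<Rightarrow> nat) \<Rightarrow> (nat \<Rightarrow> nat) \<Rightarrow> bool" where
 "good S g s h k \<longleftrightarrow> h permutes S \<and> evenperm h \<and> k permutes S \<and> evenperm k \<and> g = h \<circ> k \<and>
   mv h \<subseteq> mv g \<and> mv k \<subseteq> mv g \<and> \<bar>real (mu h) - s\<bar> \<le> 3/2 \<and> \<bar>real (mu k) - (real (mu g) - s)\<bar> \<le> 3/2"

definition Gp where "Gp S g \<longleftrightarrow> (\<forall>s. 0 \<le> s \<and> s \<le> real (mu g) \<longrightarrow> (\<exists>h k. good S g s h k))"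
definition Ip where "Ip S g \<longleftrightarrow> (\<forall>x0 s. g x0 \<noteq> x0 \<and> 3/2 \<le> s \<and> s \<le> real (mu g) \<longrightarrow> (\<exists>h k. good S g s h k \<and> h x0 \<noteq> x0))"

lemma mv_comp_sub: "mv (p \<circ> q) \<subseteq> mv p \<union> mv q"
  by (auto simp: mv_def)

lemma mv_comp_eq:
  assumes "inj p" "inj q" "mv p \<inter> mv q \<subseteq> {x}"
  shows "mv (p \<circ> q) = mv p \<union> mv q"
proof
  show "mv (p \<circ> q) \<subseteq> mv p \<union> mv q" by (rule mv_comp_sub)
  show "mv p \<union> mv q \<subseteq> mv (p \<circ> q)"
  proof
    fix z assume z: "z \<in> mv p \<union> mv q"
    show "z \<in> mv (p \<circ> q)"
    proof (cases "q z = z")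
      case True then show ?thesis using z by (auto simp: mv_def)
    next
      case False
      have qq: "q (q z) \<noteq> q z" using False injD[OF assms(2)] by metis
      show ?thesis
      proof (cases "p z = z")
        case True
        then have "p (q z) \<noteq> z" using False injD[OF assms(1)] by metis
        then show ?thesis by (simp add: mv_def)
      next
        case False2: False
        have "z = x" using assms(3) False False2 by (auto simp: mv_def)
        have "q z \<noteq> x" using False \<open>z = x\<close> by simp
        then have "p (q z) = q z" using assms(3) qq by (auto simp: mv_def)
        then show ?thesis using False by (simp add: mv_def)
      qed
    qed
  qed
qed

lemma perm_of: "finite S \<Longrightarrow> p permutes S \<Longrightarrow> permutation p"
  by (auto simp: permutation_permutes)

lemma prepend:
  assumes S: "finite S" and gd: "good S g' s' h' k'"
    and cp: "c permutes S" and ce: "evenperm c" and eq: "g = c \<circ> g'"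
    and sc: "mv c \<subseteq> mv g" and sg: "mv g' \<subseteq> mv g"
    and ov: "mv c \<inter> mv h' \<subseteq> {x}"
    and mg: "real (mu g) = real (mu c) + real (mu g') - real (card (mv c \<inter> mv h'))"
    and ss: "s = s' + real (mu c) - real (card (mv c \<inter> mv h'))"
  shows "good S g s (c \<circ> h') k' \<and> mv c \<subseteq> mv (c \<circ> h')"
proof -
  from gd have hp: "h' permutes S" and he: "evenperm h'" and kp: "k' permutes S" and ke: "evenperm k'"
    and geq: "g' = h' \<circ> k'" and hs: "mv h' \<subseteq> mv g'" and ks: "mv k' \<subseteq> mv g'"
    and b1: "\<bar>real (mu h') - s'\<bar> \<le> 3/2" and b2: "\<bar>real (mu k') - (real (mu g') - s')\<bar> \<le> 3/2"
    unfolding good_def by auto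
  have un: "mv (c \<circ> h') = mv c \<union> mv h'"
    by (rule mv_comp_eq[OF permutes_inj[OF cp] permutes_inj[OF hp] ov])
  have fc: "finite (mv c)" using mv_permutes_subset[OF cp] S finite_subset by blast
  have fh: "finite (mv h')" using mv_permutes_subset[OF hp] S finite_subset by blast
  have "card (mv c \<union> mv h') + card (mv c \<inter> mv h') = card (mv c) + card (mv h')"
    using card_Un_Int[OF fc fh] by simp
  then have "real (card (mv c \<union> mv h')) + real (card (mv c \<inter> mv h')) = real (card (mv c)) + real (card (mv h'))"
    by (metis of_nat_add)
  then have mch: "real (mu (c \<circ> h')) = real (mu c) + real (mu h') - real (card (mv c \<inter> mv h'))"
    unfolding mu_mv un by linarith
  have ev: "evenperm (c \<circ> h')"
    using ce he by (simp add: evenperm_comp perm_of[OF S cp] perm_of[OF S hp])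
  have b3: "\<bar>real (mu (c \<circ> h')) - s\<bar> \<le> 3/2" using mch ss b1 by linarith
  have b4: "\<bar>real (mu k') - (real (mu g) - s)\<bar> \<le> 3/2" using mg ss b2 by linarith
  show ?thesis
    unfolding good_def using permutes_compose[OF hp cp] ev kp ke eq geq un sc hs sg ks b3 b4
    by (auto simp: comp_assoc)
qed


lemma card_diff_real:
  assumes "finite A" "D \<subseteq> A" "finite D"
  shows "real (card (A - D)) = real (card A) - real (card D)"
  using assms by (simp add: card_Diff_subset card_mono of_nat_diff)

lemma moveA:
  assumes S: "finite S" and gp: "g permutes S" and ge: "evenperm g"
    and x0: "g x0 \<noteq> x0" and l3: "g (g x0) \<noteq> x0"
    and IH: "\<And>g'. g' permutes S \<Longrightarrow> evenperm g' \<Longrightarrow> mu g' < mu g \<Longrightarrow> Gp S g' \<and> Ip S g'"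
    and s1: "3/2 \<le> s" and s2: "s \<le> real (mu g)"
  shows "\<exists>h k. good S g s h k \<and> h x0 \<noteq> x0"
proof -
  define y where "y = g x0"
  define z where "z = g y"
  have inj: "\<And>a b. g a = g b \<Longrightarrow> a = b" using permutes_inj[OF gp] by (meson injD)
  have xy: "x0 \<noteq> y" using x0 y_def by auto
  have yz: "y \<noteq> z" using inj xy y_def z_def by metis
  have xz: "x0 \<noteq> z" using l3 y_def z_def by auto
  have x0S: "x0 \<in> S" using permutes_not_in[OF gp] x0 by metis
  have yS: "y \<in> S" using permutes_in_image[OF gp] x0S y_def by auto
  have zS: "z \<in> S" using permutes_in_image[OF gp] yS z_def by auto
  have gx: "g x0 = y" and gy: "g y = z" using y_def z_def by auto
  have gz: "g z \<noteq> z" using inj gy yz by metis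
  define c where "c = Transposition.transpose x0 y \<circ> Transposition.transpose y z"
  define g' where "g' = Transposition.transpose y z \<circ> Transposition.transpose x0 y \<circ> g"
  have cp: "c permutes S" unfolding c_def
    by (intro permutes_compose permutes_swap_id) (use x0S yS zS in auto)
  have ce: "evenperm c" unfolding c_def
    by (simp add: evenperm_comp permutation_swap_id evenperm_swap xy yz)
  have g'p: "g' permutes S" unfolding g'_def
    by (intro permutes_compose permutes_swap_id gp) (use x0S yS zS in auto)
  have g'e: "evenperm g'" unfolding g'_def
    using ge by (simp add: evenperm_comp permutation_swap_id evenperm_swap xy yz permutation_compose perm_of[OF S gp])
  have eq: "g = c \<circ> g'" by (simp add: c_def g'_def fun_eq_iff)
  have mvc: "mv c = {x0, y, z}"
    unfolding mv_def c_def using xy yz xz by (auto simp: transpose_def)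
  have mvc3: "mu c = 3" using xy yz xz by (simp add: mu_mv mvc)
  have mvg': "mv g' = mv g - {x0, y} - (if g z = x0 then {z} else {})"
  proof -
    have "g' w \<noteq> w \<longleftrightarrow> (g w \<noteq> w \<and> w \<noteq> x0 \<and> w \<noteq> y \<and> (g z = x0 \<longrightarrow> w \<noteq> z))" for w
    proof -
      have A: "g' w = Transposition.transpose y z (Transposition.transpose x0 y (g w))" by (simp add: g'_def)
      consider "w = x0" | "w = y" | "w = z" | "w \<notin> {x0,y,z}" by auto
      then show ?thesis
      proof cases
        case 1 then show ?thesis using A gx xy yz xz x0 by (auto simp: transpose_def)
      next
        case 2 then show ?thesis using A gy xy yz xz gx x0 by (auto simp: transpose_def)
      next
        case 3
        have "g z \<noteq> y" using inj gx xz by metis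
        then show ?thesis using 3 A gz xy yz xz by (auto simp: transpose_def)
      next
        case 4
        have "g w \<noteq> y" "g w \<noteq> z" using inj gx gy 4 by auto
        then show ?thesis using 4 A xy yz xz by (auto simp: transpose_def)
      qed
    qed
    then show ?thesis by (auto simp: mv_def)
  qed
  have fg: "finite (mv g)" using mv_permutes_subset[OF gp] S finite_subset by blast
  have sc: "mv c \<subseteq> mv g" using mvc x0 gx gy gz xy yz by (auto simp: mv_def)
  have sg: "mv g' \<subseteq> mv g" using mvg' by auto
  show ?thesis
  proof (cases "g z = x0")
    case True
    have mvg'2: "mv g' = mv g - {x0, y, z}" using mvg' True by auto
    have mg': "real (mu g') = real (mu g) - 3"
      unfolding mu_mv mvg'2 using card_diff_real[OF fg, of "{x0,y,z}"] sc mvc xy yz xz by simp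
    have dis: "mv c \<inter> mv g' = {}" using mvc mvg'2 by auto
    show ?thesis
    proof (cases "s \<le> 3")
      case True
      have "\<bar>real (mu c) - s\<bar> \<le> 3/2" "\<bar>real (mu g') - (real (mu g) - s)\<bar> \<le> 3/2"
        unfolding abs_le_iff using mvc3 mg' s1 True by auto
      then have "good S g s c g'" unfolding good_def
        using cp ce g'p g'e eq sc sg by auto
      moreover have "c x0 \<noteq> x0" using mvc by (auto simp: mv_def)
      ultimately show ?thesis by blast
    next
      case False
      have "mu g' < mu g" using mg' by linarith
      then have "Gp S g'" using IH g'p g'e by blast
      then obtain h' k' where gd: "good S g' (s - 3) h' k'" unfolding Gp_def using False s2 mg' by fastforce
      have "mv h' \<subseteq> mv g'" using gd unfolding good_def by auto
      then have e0: "mv c \<inter> mv h' = {}" using dis by auto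
      have "good S g s (c \<circ> h') k' \<and> mv c \<subseteq> mv (c \<circ> h')"
        by (rule prepend[OF S gd cp ce eq sc sg, where x = x0]) (use e0 mvc3 mg' in auto)
      moreover have "x0 \<in> mv c" using mvc by auto
      ultimately show ?thesis unfolding mv_def by blast
    qed
  next
    case False
    have mvg'2: "mv g' = mv g - {x0, y}" using mvg' False by auto
    have mg': "real (mu g') = real (mu g) - 2"
      unfolding mu_mv mvg'2 using card_diff_real[OF fg, of "{x0,y}"] sc mvc xy by simp
    have zg': "z \<in> mv g'" using mvg'2 gz xz yz by (auto simp: mv_def)
    have ov: "mv c \<inter> mv g' = {z}" using mvc mvg'2 zg' by auto
    show ?thesis
    proof (cases "s \<le> 7/2")
      case True
      have "\<bar>real (mu c) - s\<bar> \<le> 3/2" "\<bar>real (mu g') - (real (mu g) - s)\<bar> \<le> 3/2"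
        unfolding abs_le_iff using mvc3 mg' s1 True by auto
      then have "good S g s c g'" unfolding good_def
        using cp ce g'p g'e eq sc sg by auto
      moreover have "c x0 \<noteq> x0" using mvc by (auto simp: mv_def)
      ultimately show ?thesis by blast
    next
      case False
      have "mu g' < mu g" using mg' by linarith
      then have "Ip S g'" using IH g'p g'e by blast
      moreover have "g' z \<noteq> z \<and> 3/2 \<le> s - 2 \<and> s - 2 \<le> real (mu g')"
        using False s2 mg' zg' by (auto simp: mv_def)
      ultimately obtain h' k' where gd: "good S g' (s - 2) h' k'" and hz: "h' z \<noteq> z"
        unfolding Ip_def by blast
      have "mv h' \<subseteq> mv g'" using gd unfolding good_def by auto
      then have e1: "mv c \<inter> mv h' = {z}" using ov hz by (auto simp: mv_def)
      have "good S g s (c \<circ> h') k' \<and> mv c \<subseteq> mv (c \<circ> h')"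
        by (rule prepend[OF S gd cp ce eq sc sg, where x = z]) (use e1 mvc3 mg' in auto)
      moreover have "x0 \<in> mv c" using mvc by auto
      ultimately show ?thesis unfolding mv_def by blast
    qed
  qed
qed


lemma moveB:
  assumes S: "finite S" and gp: "g permutes S" and ge: "evenperm g"
    and x0: "g x0 \<noteq> x0" and l2: "g (g x0) = x0"
    and IH: "\<And>g'. g' permutes S \<Longrightarrow> evenperm g' \<Longrightarrow> mu g' < mu g \<Longrightarrow> Gp S g' \<and> Ip S g'"
    and s1: "3/2 \<le> s" and s2: "s \<le> real (mu g)"
  shows "\<exists>h k. good S g s h k \<and> h x0 \<noteq> x0"
proof -
  define y where "y = g x0"
  have inj: "\<And>a b. g a = g b \<Longrightarrow> a = b" using permutes_inj[OF gp] by (meson injD)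
  have xy: "x0 \<noteq> y" using x0 y_def by auto
  have gx: "g x0 = y" and gy: "g y = x0" using y_def l2 by auto
  have x0S: "x0 \<in> S" using permutes_not_in[OF gp] x0 by metis
  have yS: "y \<in> S" using permutes_in_image[OF gp] x0S y_def by auto
  obtain q where gq: "g q \<noteq> q" and qx: "q \<noteq> x0" and qy: "q \<noteq> y"
  proof -
    have "\<exists>q. g q \<noteq> q \<and> q \<noteq> x0 \<and> q \<noteq> y"
    proof (rule ccontr)
      assume "\<not> ?thesis"
      then have "g = Transposition.transpose x0 y"
        using gx gy by (auto simp: fun_eq_iff transpose_def)
      then show False using ge xy by (simp add: evenperm_swap)
    qed
    then show ?thesis using that by blast
  qed
  define r where "r = g q"
  have gq': "g q = r" using r_def by simp
  have rq: "r \<noteq> q" using gq r_def by simp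
  have rx: "r \<noteq> x0" using inj gy gq' qy by metis
  have ry: "r \<noteq> y" using inj gx gq' qx by metis
  have qS: "q \<in> S" using permutes_not_in[OF gp] gq by metis
  have rS: "r \<in> S" using permutes_in_image[OF gp] qS r_def by auto
  have gr: "g r \<noteq> r" using inj gq' rq by metis
  have fg: "finite (mv g)" using mv_permutes_subset[OF gp] S finite_subset by blast
  define c where "c = Transposition.transpose x0 y \<circ> Transposition.transpose y q"
  define k where "k = Transposition.transpose y q \<circ> Transposition.transpose x0 y \<circ> g"
  define d where "d = Transposition.transpose x0 y \<circ> Transposition.transpose q r"
  define g' where "g' = Transposition.transpose q r \<circ> Transposition.transpose x0 y \<circ> g"
  have cp: "c permutes S" unfolding c_def
    by (intro permutes_compose permutes_swap_id) (use x0S yS qS in auto)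
  have ce: "evenperm c" unfolding c_def
    by (simp add: evenperm_comp permutation_swap_id evenperm_swap xy qy[symmetric])
  have kp: "k permutes S" unfolding k_def
    by (intro permutes_compose permutes_swap_id gp) (use x0S yS qS in auto)
  have ke: "evenperm k" unfolding k_def
    using ge by (simp add: evenperm_comp permutation_swap_id evenperm_swap xy qy[symmetric] permutation_compose perm_of[OF S gp])
  have dp: "d permutes S" unfolding d_def
    by (intro permutes_compose permutes_swap_id) (use x0S yS qS rS in auto)
  have de: "evenperm d" unfolding d_def
    by (simp add: evenperm_comp permutation_swap_id evenperm_swap xy rq[symmetric])
  have g'p: "g' permutes S" unfolding g'_def
    by (intro permutes_compose permutes_swap_id gp) (use x0S yS qS rS in auto)
  have g'e: "evenperm g'" unfolding g'_def
    using ge by (simp add: evenperm_comp permutation_swap_id evenperm_swap xy rq[symmetric] permutation_compose perm_of[OF S gp])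
  have eqc: "g = c \<circ> k" by (simp add: c_def k_def fun_eq_iff)
  have eqd: "g = d \<circ> g'" by (simp add: d_def g'_def fun_eq_iff)
  have mvc: "mv c = {x0, y, q}"
    unfolding mv_def c_def using xy qx qy by (auto simp: transpose_def)
  have mvc3: "mu c = 3" using xy qx qy by (simp add: mu_mv mvc)
  have mvd: "mv d = {x0, y, q, r}"
    unfolding mv_def d_def using xy qx qy rq rx ry by (auto simp: transpose_def)
  have mvd4: "mu d = 4" using xy qx qy rq rx ry by (simp add: mu_mv mvd)
  have mvk: "mv k = mv g - {x0}"
  proof -
    have "k w \<noteq> w \<longleftrightarrow> (g w \<noteq> w \<and> w \<noteq> x0)" for w
    proof -
      have A: "k w = Transposition.transpose y q (Transposition.transpose x0 y (g w))" by (simp add: k_def)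
      consider "w = x0" | "w = y" | "w = q" | "w \<notin> {x0,y,q}" by auto
      then show ?thesis
      proof cases
        case 1 then show ?thesis using A gx xy qx qy x0 by (auto simp: transpose_def)
      next
        case 2 then show ?thesis using A gy xy qx qy gx x0 by (auto simp: transpose_def)
      next
        case 3 then show ?thesis using A gq' xy qx qy rq rx ry by (auto simp: transpose_def)
      next
        case 4
        have "g w \<noteq> y" "g w \<noteq> x0" using inj gx gy 4 by auto
        then show ?thesis using 4 A xy qx qy by (auto simp: transpose_def)
      qed
    qed
    then show ?thesis by (auto simp: mv_def)
  qed
  have mvg': "mv g' = mv g - {x0, y, q} - (if g r = q then {r} else {})"
  proof -
    have "g' w \<noteq> w \<longleftrightarrow> (g w \<noteq> w \<and> w \<noteq> x0 \<and> w \<noteq> y \<and> w \<noteq> q \<and> (g r = q \<longrightarrow> w \<noteq> r))" for w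
    proof -
      have A: "g' w = Transposition.transpose q r (Transposition.transpose x0 y (g w))" by (simp add: g'_def)
      consider "w = x0" | "w = y" | "w = q" | "w = r" | "w \<notin> {x0,y,q,r}" by auto
      then show ?thesis
      proof cases
        case 1 then show ?thesis using A gx xy qx qy rx ry by (auto simp: transpose_def)
      next
        case 2 then show ?thesis using A gy xy qx qy rx ry by (auto simp: transpose_def)
      next
        case 3 then show ?thesis using A gq' xy qx qy rq rx ry by (auto simp: transpose_def)
      next
        case 4
        have "g r \<noteq> x0" "g r \<noteq> y" using inj gx gy rx ry by metis+
        then show ?thesis using 4 A gr xy qx qy rq rx ry by (auto simp: transpose_def)
      next
        case 5
        have "g w \<noteq> y" "g w \<noteq> x0" "g w \<noteq> r" using inj gx gy gq' 5 by auto
        then show ?thesis using 5 A xy qx qy rq by (auto simp: transpose_def)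
      qed
    qed
    then show ?thesis by (auto simp: mv_def)
  qed
  have scg: "mv c \<subseteq> mv g" using mvc x0 gx gy gq xy by (auto simp: mv_def)
  have sdg: "mv d \<subseteq> mv g" using mvd x0 gx gy gq gr xy by (auto simp: mv_def)
  have skg: "mv k \<subseteq> mv g" using mvk by auto
  have sg: "mv g' \<subseteq> mv g" using mvg' by auto
  have mk: "real (mu k) = real (mu g) - 1"
    unfolding mu_mv mvk using card_diff_real[OF fg, of "{x0}"] x0 by (simp add: mv_def)
  show ?thesis
  proof (cases "s \<le> 5/2")
    case True
    have "\<bar>real (mu c) - s\<bar> \<le> 3/2" "\<bar>real (mu k) - (real (mu g) - s)\<bar> \<le> 3/2"
      unfolding abs_le_iff using mvc3 mk s1 True by auto
    then have "good S g s c k" unfolding good_def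
      using cp ce kp ke eqc scg skg by auto
    moreover have "c x0 \<noteq> x0" using mvc by (auto simp: mv_def)
    ultimately show ?thesis by blast
  next
    case s3: False
    have dx: "d x0 \<noteq> x0" using mvd by (auto simp: mv_def)
    show ?thesis
    proof (cases "g r = q")
      case True
      have mvg'2: "mv g' = mv g - {x0, y, q, r}" using mvg' True by auto
      have mg': "real (mu g') = real (mu g) - 4"
        unfolding mu_mv mvg'2 using card_diff_real[OF fg, of "{x0,y,q,r}"] sdg mvd xy qx qy rq rx ry by simp
      have dis: "mv d \<inter> mv g' = {}" using mvd mvg'2 by auto
      show ?thesis
      proof (cases "s \<le> 4")
        case True
        have "\<bar>real (mu d) - s\<bar> \<le> 3/2" "\<bar>real (mu g') - (real (mu g) - s)\<bar> \<le> 3/2"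
          unfolding abs_le_iff using mvd4 mg' s3 True by auto
        then have "good S g s d g'" unfolding good_def
          using dp de g'p g'e eqd sdg sg by auto
        then show ?thesis using dx by blast
      next
        case False
        have "mu g' < mu g" using mg' by linarith
        then have "Gp S g'" using IH g'p g'e by blast
        then obtain h' k' where gd: "good S g' (s - 4) h' k'" unfolding Gp_def using False s2 mg' by fastforce
        have "mv h' \<subseteq> mv g'" using gd unfolding good_def by auto
        then have e0: "mv d \<inter> mv h' = {}" using dis by auto
        have "good S g s (d \<circ> h') k' \<and> mv d \<subseteq> mv (d \<circ> h')"
          by (rule prepend[OF S gd dp de eqd sdg sg, where x = x0]) (use e0 mvd4 mg' in auto)
        moreover have "x0 \<in> mv d" using mvd by auto
        ultimately show ?thesis unfolding mv_def by blast
      qed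
    next
      case False
      have mvg'2: "mv g' = mv g - {x0, y, q}" using mvg' False by auto
      have mg': "real (mu g') = real (mu g) - 3"
        unfolding mu_mv mvg'2 using card_diff_real[OF fg, of "{x0,y,q}"] scg mvc xy qx qy by simp
      have rg': "r \<in> mv g'" using mvg'2 gr rx ry rq by (auto simp: mv_def)
      have ov: "mv d \<inter> mv g' = {r}" using mvd mvg'2 rg' by auto
      show ?thesis
      proof (cases "s \<le> 9/2")
        case True
        have "\<bar>real (mu d) - s\<bar> \<le> 3/2" "\<bar>real (mu g') - (real (mu g) - s)\<bar> \<le> 3/2"
          unfolding abs_le_iff using mvd4 mg' s3 True by auto
        then have "good S g s d g'" unfolding good_def
          using dp de g'p g'e eqd sdg sg by auto
        then show ?thesis using dx by blast
      next
        case False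
        have "mu g' < mu g" using mg' by linarith
        then have "Ip S g'" using IH g'p g'e by blast
        moreover have "g' r \<noteq> r \<and> 3/2 \<le> s - 3 \<and> s - 3 \<le> real (mu g')"
          using False s2 mg' rg' by (auto simp: mv_def)
        ultimately obtain h' k' where gd: "good S g' (s - 3) h' k'" and hr: "h' r \<noteq> r"
          unfolding Ip_def by blast
        have "mv h' \<subseteq> mv g'" using gd unfolding good_def by auto
        then have e1: "mv d \<inter> mv h' = {r}" using ov hr by (auto simp: mv_def)
        have "good S g s (d \<circ> h') k' \<and> mv d \<subseteq> mv (d \<circ> h')"
          by (rule prepend[OF S gd dp de eqd sdg sg, where x = r]) (use e1 mvd4 mg' in auto)
        moreover have "x0 \<in> mv d" using mvd by auto
        ultimately show ?thesis unfolding mv_def by blast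
      qed
    qed
  qed
qed


lemma main:
  assumes S: "finite S"
  shows "g permutes S \<Longrightarrow> evenperm g \<Longrightarrow> Gp S g \<and> Ip S g"
proof (induction "mu g" arbitrary: g rule: less_induct)
  case less
  have IH: "\<And>g'. g' permutes S \<Longrightarrow> evenperm g' \<Longrightarrow> mu g' < mu g \<Longrightarrow> Gp S g' \<and> Ip S g'"
    using less by blast
  have I: "Ip S g"
    unfolding Ip_def
  proof (intro allI impI)
    fix x0 s assume a: "g x0 \<noteq> x0 \<and> 3/2 \<le> s \<and> s \<le> real (mu g)"
    show "\<exists>h k. good S g s h k \<and> h x0 \<noteq> x0"
    proof (cases "g (g x0) = x0")
      case True then show ?thesis using moveB[OF S less.prems _ True IH] a by blast
    next
      case False then show ?thesis using moveA[OF S less.prems _ False IH] a by blast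
    qed
  qed
  have G: "Gp S g"
    unfolding Gp_def
  proof (intro allI impI)
    fix s assume a: "0 \<le> s \<and> s \<le> real (mu g)"
    show "\<exists>h k. good S g s h k"
    proof (cases "s \<le> 3/2")
      case True
      have m0: "mu id = 0" by (simp add: mu_mv mv_def)
      have "\<bar>real (mu id) - s\<bar> \<le> 3/2" "\<bar>real (mu g) - (real (mu g) - s)\<bar> \<le> 3/2"
        unfolding abs_le_iff m0 using a True by auto
      then have "good S g s id g" unfolding good_def using less.prems
        by (auto simp: mv_def permutes_id)
      then show ?thesis by blast
    next
      case False
      then have "mu g > 0" using a by linarith
      then have "mv g \<noteq> {}" by (auto simp: mu_mv)
      then obtain x0 where "g x0 \<noteq> x0" by (auto simp: mv_def)
      then show ?thesis using I False a unfolding Ip_def by force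
    qed
  qed
  show ?case using G I by blast
qed

theorem lemma2p2:
  fixes n :: nat and t :: real and g :: "nat \<Rightarrow> nat"
  assumes "n \<ge> 1" and "0 \<le> t" and "t \<le> 1"
    and "g permutes {1..n}" and "evenperm g"
  shows "\<exists>h k. h permutes {1..n} \<and> evenperm h \<and> k permutes {1..n} \<and> evenperm k \<and>
           g = h \<circ> k \<and>
           \<bar>real (mu h) - t * real (mu g)\<bar> \<le> 3/2 \<and>
           \<bar>real (mu k) - (1 - t) * real (mu g)\<bar> \<le> 3/2"
proof -
  have "Gp {1..n} g" using main[of "{1..n}" g] assms by auto
  moreover have "0 \<le> t * real (mu g)" "t * real (mu g) \<le> real (mu g)"
    using assms(2,3) by (auto simp: mult_left_le_one_le)
  ultimately obtain h k where "good {1..n} g (t * real (mu g)) h k" unfolding Gp_def by blast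
  moreover have "real (mu g) - t * real (mu g) = (1 - t) * real (mu g)" by algebra
  ultimately show ?thesis unfolding good_def by auto
qed

end
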